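(* Let $m,n\ge 1$ be integers and $\beta>0$. Let $U:\mathbb{R}^m\to\mathbb{R}$, let $\mathbf m:\mathbb{R}^m\to\mathbb{R}^{m\times m}$ take values in symmetric positive definite matrices, let $\mathbf H:\mathbb{R}^m\to\mathbb{R}^{m\times nm}$, and let $\boldsymbol\Gamma,\mathbf D:\mathbb{R}^m\to\mathbb{R}^{nm\times nm}$, all smooth. Define on $\widehat{\mathbf z}=(\mathbf q,\mathbf p,\boldsymbol\chi)\in\mathbb{R}^m\times\mathbb{R}^m\times\mathbb{R}^{nm}$ the extended free energy $$\widehat F(\mathbf q,\mathbf p,\boldsymbol\chi)=U(\mathbf q)+\tfrac12\mathbf p^\top\mathbf m(\mathbf q)^{-1}\mathbf p+\tfrac12\beta^{-1}\ln\det[\mathbf m(\mathbf q)]+\tfrac12\boldsymbol\chi^\top\boldsymbol\chi,$$ and consider the SDE $$\mathrm d\begin{pmatrix}\mathbf q\\ \mathbf p\\ \boldsymbol\chi\end{pmatrix}=\begin{pmatrix}0&\mathbf I&0\\ -\mathbf I&0&-\mathbf H(\mathbf q)\\ 0&\mathbf H(\mathbf q)^\top&\boldsymbol\Gamma(\mathbf q)\end{pmatrix}\nabla\widehat F(\mathbf q,\mathbf p,\boldsymbol\chi)\,\mathrm dt+\begin{pmatrix}0\\0\\ \mathbf D(\mathbf q)\,\mathrm d\mathbf W_t\end{pmatrix},$$ where $\mathbf W_t$ is a standard Brownian motion in $\mathbb{R}^{nm}$. If $\mathbf D(\mathbf q)\mathbf D(\mathbf q)^\top=-\beta^{-1}\big(\boldsymbol\Gamma(\mathbf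 q)+\boldsymbol\Gamma(\mathbf q)^\top\big)$ for all $\mathbf q$, then this SDE has the invariant distribution $$\rho_0(\mathbf q,\mathbf p,\boldsymbol\chi)\propto\frac{1}{(2\pi)^{m/2}\det[\mathbf m(\mathbf q)]^{1/2}}\exp\!\Big[-\beta\Big(U(\mathbf q)+\tfrac12\mathbf p^\top\mathbf m(\mathbf q)^{-1}\mathbf p+\tfrac12\boldsymbol\chi^\top\boldsymbol\chi\Big)\Big],$$ i.e. $\rho_0$ is a stationary solution of the associated Fokker–Planck equation.
   Context: This is a reduced (coarse-grained) model: $\mathbf q\in\mathbb{R}^m$ are coarse-grained coordinates, $\mathbf p$ their momenta, $\boldsymbol\chi=(\boldsymbol\chi_1;\dots;\boldsymbol\chi_n)$ with $\boldsymbol\chi_i\in\mathbb{R}^m$ auxiliary variables, $U$ a free energy, $\mathbf m(\mathbf q)$ a position-dependent mass matrix, and $\beta$ the inverse temperature. The density $\rho_0$ is assumed normalizable (e.g. $\int e^{-\beta U(\mathbf q)}\,\mathrm d\mathbf q<\infty$). Writing the SDE as $\mathrm d\widehat{\mathbf z}=\widehat{\mathbf J}(\mathbf q)\nabla\widehat F\,\mathrm dt+\widehat{\boldsymbol\Sigma}(\mathbf q)\,\mathrm d\mathbf W_t$, the Fokker–Planck equation is $\partial_t\rho=\nabla\cdot\big(-\widehat{\mathbf J}(\mathbf q)\nabla\widehat F\,\rho+\tfrac12\nabla\cdot(\widehat{\boldsymbol\Sigma}(\mathbf q)\widehat{\boldsymbol\Sigma}(\mathbf q)^\top\rho)\big)$.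 *)

theory Defs
  imports "HOL-Analysis.Analysis"
begin

definition partial :: "(real^'k \<Rightarrow> real) \<Rightarrow> 'k \<Rightarrow> real^'k \<Rightarrow> real" where
  "partial f i z = deriv (\<lambda>t. f (z + t *\<^sub>R axis i 1)) 0"

definition grad :: "(real^'k \<Rightarrow> real) \<Rightarrow> real^'k \<Rightarrow> real^'k" where
  "grad f z = (\<chi> i. partial f i z)"

fun iter_partial :: "'k list \<Rightarrow> (real^'k \<Rightarrow> real) \<Rightarrow> real^'k \<Rightarrow> real" where
  "iter_partial [] f = f"
| "iter_partial (i # is) f = partial (iter_partial is f) i"

definition smooth_fun :: "(real^'k \<Rightarrow> real) \<Rightarrow> bool" where
  "smooth_fun f \<longleftrightarrow> (\<forall>is. iter_partial is f differentiable_on UNIV)"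

definition sym_pos_def_matrix :: "real^'m^'m \<Rightarrow> bool" where
  "sym_pos_def_matrix A \<longleftrightarrow> transpose A = A \<and> (\<forall>x. x \<noteq> 0 \<longrightarrow> x \<bullet> (A *v x) > 0)"

text \<open>Extended state space: coordinates \<open>Inl i\<close> = q_i, \<open>Inr (Inl i)\<close> = p_i,
  \<open>Inr (Inr k)\<close> = chi_k with k ranging over an index set of size n*m.\<close>
type_synonym ('m,'n) state = "real^('m + ('m + ('m \<times> 'n)))"

definition qof :: "('m::finite,'n::finite) state \<Rightarrow> real^'m" where
  "qof z = (\<chi> i. z $ Inl i)"
definition pof :: "('m::finite,'n::finite) state \<Rightarrow> real^'m" where
  "pof z = (\<chi> i. z $ Inr (Inl i))"
definition chiof :: "('m::finite,'n::finite) state \<Rightarrow> real^('m \<times> 'n)" where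
  "chiof z = (\<chi> k. z $ Inr (Inr k))"

definition Fhat :: "real \<Rightarrow> (real^'m \<Rightarrow> real) \<Rightarrow> (real^'m \<Rightarrow> real^'m^'m)
    \<Rightarrow> ('m::finite,'n::finite) state \<Rightarrow> real" where
  "Fhat \<beta> U M z = U (qof z) + 1/2 * (pof z \<bullet> (matrix_inv (M (qof z)) *v pof z))
     + 1/2 * (1/\<beta>) * ln (det (M (qof z))) + 1/2 * (chiof z \<bullet> chiof z)"

definition Jhat :: "real^('m::finite \<times> 'n::finite)^'m \<Rightarrow> real^('m \<times> 'n)^('m \<times> 'n)
    \<Rightarrow> real^('m + ('m + ('m \<times> 'n)))^('m + ('m + ('m \<times> 'n)))" where
  "Jhat H G = (\<chi> a b. (case (a, b) of
       (Inl i, Inr (Inl j)) \<Rightarrow> (if i = j then 1 else 0)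
     | (Inr (Inl i), Inl j) \<Rightarrow> (if i = j then -1 else 0)
     | (Inr (Inl i), Inr (Inr k)) \<Rightarrow> - (H $ i $ k)
     | (Inr (Inr k), Inr (Inl i)) \<Rightarrow> H $ i $ k
     | (Inr (Inr k), Inr (Inr l)) \<Rightarrow> G $ k $ l
     | _ \<Rightarrow> 0))"

definition Sigmahat :: "real^('m::finite \<times> 'n::finite)^('m \<times> 'n)
    \<Rightarrow> real^('m \<times> 'n)^('m + ('m + ('m \<times> 'n)))" where
  "Sigmahat D = (\<chi> a l. (case a of Inr (Inr k) \<Rightarrow> D $ k $ l | _ \<Rightarrow> 0))"

definition fokker_planck_rhs ::
  "(real^'k::finite \<Rightarrow> real^'k^'k) \<Rightarrow> (real^'k \<Rightarrow> real^'w^'k)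
     \<Rightarrow> (real^'k \<Rightarrow> real) \<Rightarrow> (real^'k \<Rightarrow> real) \<Rightarrow> real^'k \<Rightarrow> real" where
  "fokker_planck_rhs J S F \<rho> z =
     (\<Sum>i\<in>UNIV. partial (\<lambda>y. - ((J y *v grad F y) $ i) * \<rho> y
        + 1/2 * (\<Sum>j\<in>UNIV. partial (\<lambda>x. ((S x ** transpose (S x)) $ i $ j) * \<rho> x) j y)) i z)"

end

theory Submission
  imports Defs
begin


lemma partial_eqI:
  "((\<lambda>t. f (z + t *\<^sub>R axis i 1)) has_real_derivative d) (at 0) \<Longrightarrow> partial f i z = d"
  by (simp add: partial_def DERIV_imp_deriv)

lemma differentiable_prod_fin:
  fixes f :: "'i \<Rightarrow> 'a::real_normed_vector \<Rightarrow> real"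
  assumes "finite S" "\<And>i. i \<in> S \<Longrightarrow> f i differentiable (at x)"
  shows "(\<lambda>x. \<Prod>i\<in>S. f i x) differentiable (at x)"
  using assms by (induction S rule: finite_induct) auto

lemma det_differentiable:
  fixes A :: "'a::real_normed_vector \<Rightarrow> real^'n^'n"
  assumes "\<And>i j. (\<lambda>t. A t $ i $ j) differentiable (at x)"
  shows "(\<lambda>t. det (A t)) differentiable (at x)"
  unfolding det_def
  by (intro differentiable_sum ballI differentiable_mult differentiable_const
      differentiable_prod_fin assms) auto

lemma smooth_diff: "smooth_fun f \<Longrightarrow> f differentiable (at q)"
  unfolding smooth_fun_def
  by (metis iter_partial.simps(1) differentiable_on_def UNIV_I at_within_open open_UNIV)

lemma line_has_deriv:
  fixes g :: "real^'k \<Rightarrow> real"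
  assumes "\<And>q. g differentiable (at q)"
  shows "((\<lambda>t. g (q + t *\<^sub>R v)) has_real_derivative deriv (\<lambda>t. g (q + t *\<^sub>R v)) 0) (at 0)"
proof -
  have "(\<lambda>t. g (q + t *\<^sub>R v)) differentiable (at 0)"
    by (rule differentiable_compose[OF assms]) (intro derivative_intros)
  then show ?thesis using DERIV_deriv_iff_real_differentiable by blast
qed



lemma pd_det_nz:
  fixes A :: "real^'m^'m"
  assumes "\<forall>x. x \<noteq> 0 \<longrightarrow> x \<bullet> (A *v x) > 0"
  shows "det A \<noteq> 0"
proof -
  have "\<forall>x. A *v x = 0 \<longrightarrow> x = 0"
    using assms by (metis inner_zero_right less_irrefl)
  then obtain B where "B ** A = mat 1" using matrix_left_invertible_ker by blast
  then have "A ** B = mat 1" using matrix_left_right_inverse by blast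
  with \<open>B ** A = mat 1\<close> have "invertible A" unfolding invertible_def by blast
  then show ?thesis using invertible_det_nz by blast
qed

lemma spd_det_pos:
  fixes A :: "real^'m^'m"
  assumes "sym_pos_def_matrix A"
  shows "det A > 0"
proof (rule ccontr)
  assume "\<not> det A > 0"
  hence le: "det A \<le> 0" by simp
  define g where "g t = det ((1-t) *\<^sub>R mat 1 + t *\<^sub>R A)" for t :: real
  have cont: "isCont g t" for t
  proof -
    have "(\<lambda>t. det ((1-t) *\<^sub>R mat 1 + t *\<^sub>R A)) differentiable (at t)"
      by (rule det_differentiable) (simp add: mat_def)
    then show ?thesis unfolding g_def by (rule differentiable_imp_continuous_within)
  qed
  have g0: "g 0 = 1" by (simp add: g_def)
  have g1: "g 1 = det A" by (simp add: g_def)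
  obtain t where t: "0 \<le> t" "t \<le> 1" "g t = 0"
    using IVT2[of g 1 0 0] cont g0 g1 le by auto
  have "\<forall>x. x \<noteq> 0 \<longrightarrow> x \<bullet> (((1-t) *\<^sub>R mat 1 + t *\<^sub>R A) *v x) > 0"
  proof (intro allI impI)
    fix x :: "real^'m" assume x: "x \<noteq> 0"
    have e: "x \<bullet> (((1-t) *\<^sub>R mat 1 + t *\<^sub>R A) *v x) = (1-t) * (x \<bullet> x) + t * (x \<bullet> (A *v x))"
      by (simp add: matrix_vector_mult_add_rdistrib scaleR_matrix_vector_assoc[symmetric] inner_add_right)
    have a: "x \<bullet> (A *v x) > 0" using assms x unfolding sym_pos_def_matrix_def by blast
    have b: "x \<bullet> x > 0" using x by simp
    show "x \<bullet> (((1-t) *\<^sub>R mat 1 + t *\<^sub>R A) *v x) > 0"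
    proof (cases "t = 0")
      case True then show ?thesis using e b by simp
    next
      case False then have "t > 0" using t by simp
      then have "t * (x \<bullet> (A *v x)) > 0" using a by simp
      moreover have "(1-t) * (x \<bullet> x) \<ge> 0" using t b by simp
      ultimately show ?thesis using e by linarith
    qed
  qed
  then have "g t \<noteq> 0" unfolding g_def by (rule pd_det_nz)
  with t show False by simp
qed

lemma matrix_inv_cramer:
  fixes A :: "real^'m^'m"
  assumes "det A \<noteq> 0"
  shows "matrix_inv A $ a $ b = det (\<chi> i j. if j = a then (if i = b then 1 else 0) else A$i$j) / det A"
proof -
  have "invertible A" using assms invertible_det_nz by blast
  then have "A ** matrix_inv A = mat 1 \<and> matrix_inv A ** A = mat 1"
    unfolding invertible_def matrix_inv_def by (rule someI_ex)
  then have "A *v (matrix_inv A *v axis b 1) = axis b 1"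
    by (simp add: matrix_vector_mul_assoc)
  then have "matrix_inv A *v axis b 1 = (\<chi> k. det(\<chi> i j. if j=k then axis b 1 $i else A$i$j) / det A)"
    using cramer[OF assms] by blast
  then have "(matrix_inv A *v axis b 1) $ a = det(\<chi> i j. if j=a then axis b 1 $i else A$i$j) / det A"
    by simp
  moreover have "(matrix_inv A *v axis b 1) $ a = matrix_inv A $ a $ b"
    by (simp add: matrix_vector_mult_basis column_def)
  moreover have "(\<chi> i j. if j=a then axis b 1 $i else A$i$j) = (\<chi> i j. if j = a then (if i = b then 1 else 0) else A$i$j)"
    unfolding vec_eq_iff by (simp add: axis_def)
  ultimately show ?thesis by simp
qed



lemma sum_UNIV_sum: "sum f (UNIV :: ('a::finite + 'b::finite) set) = sum (\<lambda>a. f (Inl a)) UNIV + sum (\<lambda>b. f (Inr b)) UNIV"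
  by (subst UNIV_Plus_UNIV[symmetric], subst sum.Plus) (auto simp: o_def)

lemma qof_line[simp]:
  "qof (z + t *\<^sub>R axis (Inl i) 1) = qof z + t *\<^sub>R axis i 1"
  "qof (z + t *\<^sub>R axis (Inr j) 1) = qof z"
  by (auto simp: qof_def vec_eq_iff axis_def)
lemma pof_line[simp]:
  "pof (z + t *\<^sub>R axis (Inr (Inl i)) 1) = pof z + t *\<^sub>R axis i 1"
  "pof (z + t *\<^sub>R axis (Inl j) 1) = pof z"
  "pof (z + t *\<^sub>R axis (Inr (Inr k)) 1) = pof z"
  by (auto simp: pof_def vec_eq_iff axis_def)
lemma chiof_line[simp]:
  "chiof (z + t *\<^sub>R axis (Inr (Inr k)) 1) = chiof z + t *\<^sub>R axis k 1"
  "chiof (z + t *\<^sub>R axis (Inl j) 1) = chiof z"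
  "chiof (z + t *\<^sub>R axis (Inr (Inl i)) 1) = chiof z"
  by (auto simp: chiof_def vec_eq_iff axis_def)

lemma sax: "(\<Sum>a\<in>UNIV. (axis i (1::real) $ a) * c a) = c i"
  by (simp add: axis_def if_distrib[of "\<lambda>x. x * _"] cong: if_cong)
lemma sax': "(\<Sum>a\<in>UNIV. c a * (axis i (1::real) $ a)) = c i"
  by (simp add: axis_def if_distrib[of "\<lambda>x. _ * x"] cong: if_cong)

lemma quad_expand: "(p::real^'a) \<bullet> (A *v p) = (\<Sum>a\<in>UNIV. \<Sum>b\<in>UNIV. p$a * A$a$b * p$b)"
  by (simp add: inner_vec_def matrix_vector_mult_def sum_distrib_left mult.assoc)

lemma quad_line:
  fixes A :: "real \<Rightarrow> real^'a^'a"
  assumes "\<And>a b. ((\<lambda>t. A t $a$b) has_real_derivative A' $a$b) (at 0)"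
  shows "((\<lambda>t. p \<bullet> (A t *v p)) has_real_derivative p \<bullet> (A' *v p)) (at 0)"
  unfolding quad_expand
  by (intro DERIV_sum DERIV_cmult DERIV_cmult_right assms)

lemma quad_p_line:
  fixes A :: "real^'a^'a"
  shows "((\<lambda>t. (p + t *\<^sub>R axis i 1) \<bullet> (A *v (p + t *\<^sub>R axis i 1))) has_real_derivative
     ((A *v p)$i + (transpose A *v p)$i)) (at 0)"
proof -
  have "((\<lambda>t. (\<Sum>a\<in>UNIV. \<Sum>b\<in>UNIV. (p$a + t * axis i 1 $ a) * A$a$b * (p$b + t * axis i 1 $ b)))
     has_real_derivative (\<Sum>a\<in>UNIV. \<Sum>b\<in>UNIV. (axis i 1 $ a) * A$a$b * (p$b + 0 * axis i 1 $ b)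
        + (p$a + 0 * axis i 1 $ a) * A$a$b * (axis i 1 $ b))) (at 0)"
    by (intro DERIV_sum) (auto intro!: derivative_eq_intros)
  moreover have "(\<Sum>a\<in>UNIV. \<Sum>b\<in>UNIV. (axis i 1 $ a) * A$a$b * (p$b + 0 * axis i 1 $ b)
        + (p$a + 0 * axis i 1 $ a) * A$a$b * (axis i 1 $ b)) = (A *v p)$i + (transpose A *v p)$i"
  proof -
    have 1: "(\<Sum>a\<in>UNIV. \<Sum>b\<in>UNIV. (axis i 1 $ a) * A$a$b * p$b) = (A *v p)$i"
      by (simp add: sum_distrib_left[symmetric] mult.assoc sax matrix_vector_mult_def)
    have 2: "(\<Sum>a\<in>UNIV. \<Sum>b\<in>UNIV. p$a * A$a$b * (axis i 1 $ b)) = (transpose A *v p)$i"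
      by (simp only: sax' matrix_vector_mult_def transpose_def) (simp add: mult.commute)
    show ?thesis using 1 2 by (simp add: sum.distrib)
  qed
  ultimately show ?thesis unfolding quad_expand by simp
qed

lemma inner_line:
  fixes x :: "real^'a"
  shows "((\<lambda>t. (x + t *\<^sub>R axis k 1) \<bullet> (x + t *\<^sub>R axis k 1)) has_real_derivative 2 * x$k) (at 0)"
proof -
  have "(\<lambda>t. (x + t *\<^sub>R axis k 1) \<bullet> (x + t *\<^sub>R axis k 1)) = (\<lambda>t. x \<bullet> x + 2 * t * x$k + t^2)"
    by (auto simp: inner_add_left inner_add_right inner_axis inner_axis' power2_eq_square inner_commute)
  moreover have "((\<lambda>t. x \<bullet> x + 2 * t * x$k + t^2) has_real_derivative 2 * x$k) (at 0)"
    by (auto intro!: derivative_eq_intros)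
  ultimately show ?thesis by simp
qed

lemma mv_line:
  fixes A :: "real \<Rightarrow> real^'a^'a"
  assumes "\<And>a b. ((\<lambda>t. A t $a$b) has_real_derivative A' $a$b) (at 0)"
  shows "((\<lambda>t. (A t *v p)$i) has_real_derivative (A' *v p)$i) (at 0)"
    and "((\<lambda>t. (transpose (A t) *v p)$i) has_real_derivative (transpose A' *v p)$i) (at 0)"
  unfolding matrix_vector_mult_def transpose_def
  by (auto intro!: DERIV_sum DERIV_cmult_right assms)

lemma mv_line':
  fixes A :: "real \<Rightarrow> real^'a^'a"
  assumes "\<And>a b. ((\<lambda>t. A t $a$b) has_real_derivative A' $a$b) (at 0)"
  shows "((\<lambda>t. (p v* A t)$i) has_real_derivative (p v* A')$i) (at 0)"
  using mv_line(2)[OF assms, of p i] by simp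



locale fpl =
  fixes \<beta> :: real
    and U :: "real^'m::finite \<Rightarrow> real"
    and M :: "real^'m \<Rightarrow> real^'m^'m"
    and H :: "real^'m \<Rightarrow> real^('m \<times> 'n::finite)^'m"
    and \<Gamma> :: "real^'m \<Rightarrow> real^('m \<times> 'n)^('m \<times> 'n)"
    and D :: "real^'m \<Rightarrow> real^('m \<times> 'n)^('m \<times> 'n)"
  assumes beta_pos: "\<beta> > 0"
    and U_diff: "\<And>q. U differentiable (at q)"
    and M_diff: "\<And>i j q. (\<lambda>q. M q $ i $ j) differentiable (at q)"
    and M_spd: "\<And>q. sym_pos_def_matrix (M q)"
    and fluct_diss: "\<And>q. D q ** transpose (D q) = - (1/\<beta>) *\<^sub>R (\<Gamma> q + transpose (\<Gamma> q))"
begin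

definition G where "G q = matrix_inv (M q)"
definition ddq :: "(real^'m \<Rightarrow> real) \<Rightarrow> real^'m \<Rightarrow> 'm \<Rightarrow> real" where
  "ddq g q i = deriv (\<lambda>t. g (q + t *\<^sub>R axis i 1)) 0"
definition dG where "dG i q = (\<chi> a b. ddq (\<lambda>q. G q $ a $ b) q i)"
definition Fq where "Fq i (y::('m,'n) state) = ddq U (qof y) i + 1/2 * (pof y \<bullet> (dG i (qof y) *v pof y))
   + 1/2 * (1/\<beta>) * ddq (\<lambda>q. ln (det (M q))) (qof y) i"
definition Sp where "Sp i (y::('m,'n) state) = 1/2 * ((G (qof y) *v pof y)$i + (transpose (G (qof y)) *v pof y)$i)"

lemma diff_if: "f differentiable F \<Longrightarrow> g differentiable F \<Longrightarrow> (\<lambda>x. if c then f x else g x) differentiable F"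
  by (cases c) auto

lemma det_pos: "det (M q) > 0"
  using spd_det_pos[OF M_spd] .

lemma G_diff: "(\<lambda>q. G q $ a $ b) differentiable (at q)"
proof -
  have "(\<lambda>q. G q $ a $ b) = (\<lambda>q. det (\<chi> i j. if j = a then (if i = b then 1 else 0) else M q$i$j) / det (M q))"
  proof (rule ext)
    fix q
    show "G q $ a $ b = det (\<chi> i j. if j = a then (if i = b then 1 else 0) else M q$i$j) / det (M q)"
      unfolding G_def by (rule matrix_inv_cramer) (use det_pos[of q] in simp)
  qed
  moreover have "(\<lambda>q. det (\<chi> i j. if j = a then (if i = b then 1 else 0) else M q$i$j) / det (M q)) differentiable (at q)"
    using det_pos[of q]
    by (intro differentiable_divide det_differentiable) (auto simp: M_diff intro!: diff_if)
  ultimately show ?thesis by simp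
qed

lemma lndet_diff: "(\<lambda>q. ln (det (M q))) differentiable (at q)"
proof -
  have "ln differentiable (at (det (M q)))"
    using DERIV_ln[OF det_pos[of q]] real_differentiable_def
    by (metis differentiable_def has_field_derivative_imp_has_derivative)
  then show ?thesis
    by (rule differentiable_compose) (intro det_differentiable M_diff)
qed

lemma line_ddq:
  assumes "\<And>q. g differentiable (at q)"
  shows "((\<lambda>t. g (q + t *\<^sub>R axis i 1)) has_real_derivative ddq g q i) (at 0)"
  unfolding ddq_def by (rule line_has_deriv[OF assms])

lemma G_line: "((\<lambda>t. G (q + t *\<^sub>R axis i 1) $ a $ b) has_real_derivative dG i q $ a $ b) (at 0)"
  unfolding dG_def using line_ddq[OF G_diff, of q i a b] by simp

lemma F_line_q: "((\<lambda>t. Fhat \<beta> U M (y + t *\<^sub>R axis (Inl i) 1)) has_real_derivative Fq i y) (at 0)"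
proof -
  have e: "(\<lambda>t. Fhat \<beta> U M (y + t *\<^sub>R axis (Inl i) 1)) = (\<lambda>t. U (qof y + t *\<^sub>R axis i 1)
     + 1/2 * (pof y \<bullet> (G (qof y + t *\<^sub>R axis i 1) *v pof y))
     + 1/2 * (1/\<beta>) * ln (det (M (qof y + t *\<^sub>R axis i 1))) + 1/2 * (chiof y \<bullet> chiof y))"
    by (simp add: Fhat_def G_def)
  have "((\<lambda>t. U (qof y + t *\<^sub>R axis i 1)
     + 1/2 * (pof y \<bullet> (G (qof y + t *\<^sub>R axis i 1) *v pof y))
     + 1/2 * (1/\<beta>) * ln (det (M (qof y + t *\<^sub>R axis i 1))) + 1/2 * (chiof y \<bullet> chiof y))
     has_real_derivative (ddq U (qof y) i + 1/2 * (pof y \<bullet> (dG i (qof y) *v pof y))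
     + 1/2 * (1/\<beta>) * ddq (\<lambda>q. ln (det (M q))) (qof y) i + 0)) (at 0)"
    by (intro DERIV_add DERIV_cmult line_ddq U_diff lndet_diff quad_line G_line DERIV_const)
  then show ?thesis unfolding e Fq_def by simp
qed

lemma F_line_p: "((\<lambda>t. Fhat \<beta> U M (y + t *\<^sub>R axis (Inr (Inl i)) 1)) has_real_derivative Sp i y) (at 0)"
proof -
  have e: "(\<lambda>t. Fhat \<beta> U M (y + t *\<^sub>R axis (Inr (Inl i)) 1)) = (\<lambda>t. U (qof y)
     + 1/2 * ((pof y + t *\<^sub>R axis i 1) \<bullet> (G (qof y) *v (pof y + t *\<^sub>R axis i 1)))
     + 1/2 * (1/\<beta>) * ln (det (M (qof y))) + 1/2 * (chiof y \<bullet> chiof y))"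
    by (simp add: Fhat_def G_def)
  have "((\<lambda>t. U (qof y)
     + 1/2 * ((pof y + t *\<^sub>R axis i 1) \<bullet> (G (qof y) *v (pof y + t *\<^sub>R axis i 1)))
     + 1/2 * (1/\<beta>) * ln (det (M (qof y))) + 1/2 * (chiof y \<bullet> chiof y))
     has_real_derivative (0 + 1/2 * ((G (qof y) *v pof y)$i + (transpose (G (qof y)) *v pof y)$i) + 0 + 0)) (at 0)"
    by (intro DERIV_add DERIV_cmult quad_p_line DERIV_const)
  then show ?thesis unfolding e Sp_def by simp
qed

lemma F_line_chi: "((\<lambda>t. Fhat \<beta> U M (y + t *\<^sub>R axis (Inr (Inr k)) 1)) has_real_derivative chiof y $ k) (at 0)"
proof -
  have e: "(\<lambda>t. Fhat \<beta> U M (y + t *\<^sub>R axis (Inr (Inr k)) 1)) = (\<lambda>t. U (qof y)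
     + 1/2 * (pof y \<bullet> (G (qof y) *v pof y))
     + 1/2 * (1/\<beta>) * ln (det (M (qof y))) + 1/2 * ((chiof y + t *\<^sub>R axis k 1) \<bullet> (chiof y + t *\<^sub>R axis k 1)))"
    by (simp add: Fhat_def G_def)
  have "((\<lambda>t. U (qof y)
     + 1/2 * (pof y \<bullet> (G (qof y) *v pof y))
     + 1/2 * (1/\<beta>) * ln (det (M (qof y))) + 1/2 * ((chiof y + t *\<^sub>R axis k 1) \<bullet> (chiof y + t *\<^sub>R axis k 1)))
     has_real_derivative (0 + 0 + 0 + 1/2 * (2 * chiof y $ k))) (at 0)"
    by (intro DERIV_add DERIV_cmult inner_line DERIV_const)
  then show ?thesis unfolding e by simp
qed

end


context fpl begin

definition K :: real where "K = 1 / (2 * pi) powr (real CARD('m) / 2)"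
definition rho :: "('m,'n) state \<Rightarrow> real" where
  "rho = (\<lambda>y. 1 / ((2 * pi) powr (real CARD('m) / 2) * sqrt (det (M (qof y))))
          * exp (- \<beta> * (U (qof y) + 1/2 * (pof y \<bullet> (matrix_inv (M (qof y)) *v pof y))
                          + 1/2 * (chiof y \<bullet> chiof y))))"
abbreviation F where "F \<equiv> Fhat \<beta> U M"

lemma rho_eq: "rho y = K * exp (- \<beta> * F y)"
proof -
  define d where "d = det (M (qof y))"
  define a where "a = U (qof y) + 1/2 * (pof y \<bullet> (matrix_inv (M (qof y)) *v pof y)) + 1/2 * (chiof y \<bullet> chiof y)"
  have d: "d > 0" unfolding d_def by (rule det_pos)
  have s: "sqrt d = exp (ln d / 2)"
    using d by (simp add: powr_half_sqrt[symmetric] powr_def)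
  have "- \<beta> * F y = - \<beta> * a - ln d / 2"
    using beta_pos unfolding Fhat_def a_def d_def by (simp add: field_simps)
  then have "exp (- \<beta> * F y) = exp (- \<beta> * a) / sqrt d"
    by (simp add: s exp_diff)
  then show ?thesis unfolding rho_def K_def a_def[symmetric] d_def[symmetric] by simp
qed

lemma rho_line:
  assumes "((\<lambda>t. F (y + t *\<^sub>R axis c 1)) has_real_derivative d) (at 0)"
  shows "((\<lambda>t. rho (y + t *\<^sub>R axis c 1)) has_real_derivative (-\<beta> * d * rho y)) (at 0)"
proof -
  have "((\<lambda>t. K * exp (- \<beta> * F (y + t *\<^sub>R axis c 1))) has_real_derivative
      K * (exp (- \<beta> * F (y + 0 *\<^sub>R axis c 1)) * (- \<beta> * d))) (at 0)"
    by (intro DERIV_cmult DERIV_fun_exp DERIV_cmult assms)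
  then show ?thesis by (simp add: rho_eq mult_ac)
qed

lemma grad_q: "grad F y $ Inl i = Fq i y"
  unfolding grad_def by (simp add: partial_eqI[OF F_line_q])
lemma grad_p: "grad F y $ Inr (Inl i) = Sp i y"
  unfolding grad_def by (simp add: partial_eqI[OF F_line_p])
lemma grad_chi: "grad F y $ Inr (Inr k) = chiof y $ k"
  unfolding grad_def by (simp add: partial_eqI[OF F_line_chi])

lemma J_q: "(Jhat (H (qof y)) (\<Gamma> (qof y)) *v grad F y) $ Inl i = Sp i y"
  by (simp add: matrix_vector_mult_def Jhat_def sum_UNIV_sum grad_p if_distrib[of "\<lambda>x. x * _"] cong: if_cong)

lemma J_p: "(Jhat (H (qof y)) (\<Gamma> (qof y)) *v grad F y) $ Inr (Inl i)
   = - Fq i y - (\<Sum>k\<in>UNIV. H (qof y) $ i $ k * chiof y $ k)"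
  by (simp add: matrix_vector_mult_def Jhat_def sum_UNIV_sum grad_q grad_chi if_distrib[of "\<lambda>x. x * _"] sum_negf cong: if_cong)

lemma J_chi: "(Jhat (H (qof y)) (\<Gamma> (qof y)) *v grad F y) $ Inr (Inr k)
   = (\<Sum>i\<in>UNIV. H (qof y) $ i $ k * Sp i y) + (\<Sum>l\<in>UNIV. \<Gamma> (qof y) $ k $ l * chiof y $ l)"
  by (simp add: matrix_vector_mult_def Jhat_def sum_UNIV_sum grad_p grad_chi)

definition Am where "Am q k l = -(1/\<beta>) * (\<Gamma> q $ k $ l + \<Gamma> q $ l $ k)"

lemma Sig_chi: "(Sigmahat (D q) ** transpose (Sigmahat (D q))) $ Inr (Inr k) $ Inr (Inr l) = Am q k l"
proof -
  have "(Sigmahat (D q) ** transpose (Sigmahat (D q))) $ Inr (Inr k) $ Inr (Inr l) = (D q ** transpose (D q)) $ k $ l"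
    by (simp add: matrix_matrix_mult_def Sigmahat_def transpose_def)
  also have "\<dots> = Am q k l" by (subst fluct_diss) (simp add: Am_def transpose_def)
  finally show ?thesis .
qed

lemma Sig_zero1: "(Sigmahat (D q) ** transpose (Sigmahat (D q))) $ Inl i $ b = 0"
  "(Sigmahat (D q) ** transpose (Sigmahat (D q))) $ Inr (Inl i) $ b = 0"
  "(Sigmahat (D q) ** transpose (Sigmahat (D q))) $ a $ Inl i = 0"
  "(Sigmahat (D q) ** transpose (Sigmahat (D q))) $ a $ Inr (Inl i) = 0"
  by (simp_all add: matrix_matrix_mult_def Sigmahat_def transpose_def)

end


lemma partial_const[simp]: "partial (\<lambda>x. c) j y = 0"
  by (simp add: partial_def)

context fpl begin

definition Inn where "Inn a y = (\<Sum>j\<in>UNIV. partial (\<lambda>x. ((Sigmahat (D (qof x)) ** transpose (Sigmahat (D (qof x)))) $ a $ j) * rho x) j y)"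

lemma Inn_q: "Inn (Inl i) y = 0" and Inn_p: "Inn (Inr (Inl i)) y = 0"
  by (simp_all add: Inn_def Sig_zero1)

lemma Inn_chi: "Inn (Inr (Inr k)) y = (\<Sum>l\<in>UNIV. Am (qof y) k l * (-\<beta> * chiof y $ l * rho y))"
proof -
  have "partial (\<lambda>x. Am (qof x) k l * rho x) (Inr (Inr l)) y = Am (qof y) k l * (-\<beta> * chiof y $ l * rho y)" for l
    by (rule partial_eqI) (unfold qof_line, intro DERIV_cmult rho_line F_line_chi)
  then show ?thesis
    by (simp add: Inn_def sum_UNIV_sum Sig_zero1 Sig_chi)
qed

definition Phi where "Phi a = (\<lambda>y. - ((Jhat (H (qof y)) (\<Gamma> (qof y)) *v grad F y) $ a) * rho y + 1/2 * Inn a y)"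

lemma Phi_q: "Phi (Inl i) = (\<lambda>y. - Sp i y * rho y)"
  by (simp add: Phi_def J_q Inn_q)
lemma Phi_p: "Phi (Inr (Inl i)) = (\<lambda>y. (Fq i y + (\<Sum>k\<in>UNIV. H (qof y) $ i $ k * chiof y $ k)) * rho y)"
  by (rule ext) (simp add: Phi_def J_p Inn_p algebra_simps)
lemma Phi_chi: "Phi (Inr (Inr k)) = (\<lambda>y. - ((\<Sum>i\<in>UNIV. H (qof y) $ i $ k * Sp i y) + (\<Sum>l\<in>UNIV. \<Gamma> (qof y) $ k $ l * chiof y $ l)) * rho y
    + 1/2 * (\<Sum>l\<in>UNIV. Am (qof y) k l * (-\<beta> * chiof y $ l * rho y)))"
  by (simp add: Phi_def J_chi Inn_chi)

definition dS where "dS i y = 1/2 * ((dG i (qof y) *v pof y)$i + (transpose (dG i (qof y)) *v pof y)$i)"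

lemma O_q: "partial (Phi (Inl i)) (Inl i) z = - dS i z * rho z - Sp i z * (-\<beta> * Fq i z * rho z)"
proof (rule partial_eqI)
  have e: "(\<lambda>t. Phi (Inl i) (z + t *\<^sub>R axis (Inl i) 1)) = (\<lambda>t. - (1/2 * ((G (qof z + t *\<^sub>R axis i 1) *v pof z)$i
      + (transpose (G (qof z + t *\<^sub>R axis i 1)) *v pof z)$i)) * rho (z + t *\<^sub>R axis (Inl i) 1))"
    by (simp add: Phi_q Sp_def)
  show "((\<lambda>t. Phi (Inl i) (z + t *\<^sub>R axis (Inl i) 1)) has_real_derivative - dS i z * rho z - Sp i z * (-\<beta> * Fq i z * rho z)) (at 0)"
    unfolding e
    by (auto intro!: derivative_eq_intros mv_line mv_line' G_line rho_line F_line_q simp: dS_def Sp_def field_simps)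
qed


lemma O_p: "partial (Phi (Inr (Inl i))) (Inr (Inl i)) z =
   dS i z * rho z + (Fq i z + (\<Sum>k\<in>UNIV. H (qof z) $ i $ k * chiof z $ k)) * (-\<beta> * Sp i z * rho z)"
proof (rule partial_eqI)
  have e: "(\<lambda>t. Phi (Inr (Inl i)) (z + t *\<^sub>R axis (Inr (Inl i)) 1)) = (\<lambda>t. (ddq U (qof z) i
      + 1/2 * ((pof z + t *\<^sub>R axis i 1) \<bullet> (dG i (qof z) *v (pof z + t *\<^sub>R axis i 1)))
      + 1/2 * (1/\<beta>) * ddq (\<lambda>q. ln (det (M q))) (qof z) i
      + (\<Sum>k\<in>UNIV. H (qof z) $ i $ k * chiof z $ k)) * rho (z + t *\<^sub>R axis (Inr (Inl i)) 1))"
    by (simp add: Phi_p Fq_def)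
  show "((\<lambda>t. Phi (Inr (Inl i)) (z + t *\<^sub>R axis (Inr (Inl i)) 1)) has_real_derivative
     dS i z * rho z + (Fq i z + (\<Sum>k\<in>UNIV. H (qof z) $ i $ k * chiof z $ k)) * (-\<beta> * Sp i z * rho z)) (at 0)"
    unfolding e using beta_pos
    by (auto intro!: derivative_eq_intros quad_p_line rho_line F_line_p simp: dS_def Fq_def field_simps)
qed

lemma sum_line_lin: "(\<Sum>l\<in>UNIV. c l * (x$l + t * axis k (1::real) $ l)) = (\<Sum>l\<in>UNIV. c l * x$l) + t * c k"
proof -
  have "(\<Sum>l\<in>UNIV. c l * (t * axis k (1::real) $ l)) = t * (\<Sum>l\<in>UNIV. c l * axis k (1::real) $ l)"
    by (simp add: sum_distrib_left mult_ac)
  then show ?thesis by (simp add: distrib_left sum.distrib sax')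
qed

lemma O_chi: "partial (Phi (Inr (Inr k))) (Inr (Inr k)) z =
   - \<Gamma> (qof z) $ k $ k * rho z
   - ((\<Sum>i\<in>UNIV. H (qof z) $ i $ k * Sp i z) + (\<Sum>l\<in>UNIV. \<Gamma> (qof z) $ k $ l * chiof z $ l)) * (-\<beta> * chiof z $ k * rho z)
   - \<beta>/2 * (Am (qof z) k k * rho z + (\<Sum>l\<in>UNIV. Am (qof z) k l * chiof z $ l) * (-\<beta> * chiof z $ k * rho z))"
proof (rule partial_eqI)
  let ?r = "\<lambda>t. rho (z + t *\<^sub>R axis (Inr (Inr k)) 1)"
  have sp: "Sp i (z + t *\<^sub>R axis (Inr (Inr k)) 1) = Sp i z" for i t by (simp add: Sp_def)
  have s2: "(\<Sum>l\<in>UNIV. Am (qof z) k l * (-\<beta> * (chiof z $ l + t * axis k 1 $ l) * r))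
     = (-\<beta> * r) * ((\<Sum>l\<in>UNIV. Am (qof z) k l * chiof z $ l) + t * Am (qof z) k k)" for t r
  proof -
    have "(\<Sum>l\<in>UNIV. Am (qof z) k l * (-\<beta> * (chiof z $ l + t * axis k 1 $ l) * r))
       = (-\<beta> * r) * (\<Sum>l\<in>UNIV. Am (qof z) k l * (chiof z $ l + t * axis k 1 $ l))"
      by (simp add: sum_distrib_left mult_ac)
    then show ?thesis by (simp add: sum_line_lin)
  qed
  have e: "(\<lambda>t. Phi (Inr (Inr k)) (z + t *\<^sub>R axis (Inr (Inr k)) 1)) = (\<lambda>t.
      - ((\<Sum>i\<in>UNIV. H (qof z) $ i $ k * Sp i z) + ((\<Sum>l\<in>UNIV. \<Gamma> (qof z) $ k $ l * chiof z $ l) + t * \<Gamma> (qof z) $ k $ k)) * ?r t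
      + 1/2 * ((-\<beta> * ?r t) * ((\<Sum>l\<in>UNIV. Am (qof z) k l * chiof z $ l) + t * Am (qof z) k k)))"
    by (rule ext) (simp only: Phi_chi qof_line chiof_line sp vector_add_component vector_scaleR_component
        sum_line_lin s2 real_scaleR_def)
  show "((\<lambda>t. Phi (Inr (Inr k)) (z + t *\<^sub>R axis (Inr (Inr k)) 1)) has_real_derivative
   - \<Gamma> (qof z) $ k $ k * rho z
   - ((\<Sum>i\<in>UNIV. H (qof z) $ i $ k * Sp i z) + (\<Sum>l\<in>UNIV. \<Gamma> (qof z) $ k $ l * chiof z $ l)) * (-\<beta> * chiof z $ k * rho z)
   - \<beta>/2 * (Am (qof z) k k * rho z + (\<Sum>l\<in>UNIV. Am (qof z) k l * chiof z $ l) * (-\<beta> * chiof z $ k * rho z))) (at 0)"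
    unfolding e
    by (auto intro!: derivative_eq_intros rho_line F_line_chi simp: field_simps)
qed

end


context fpl begin

lemma fp_zero:
  "fokker_planck_rhs (\<lambda>y. Jhat (H (qof y)) (\<Gamma> (qof y))) (\<lambda>y. Sigmahat (D (qof y))) F rho z = 0"
proof -
  define r where "r = rho z"
  define q where "q = qof z"
  define x where "x = chiof z"
  have b0: "\<beta> \<noteq> 0" using beta_pos by simp
  have fp: "fokker_planck_rhs (\<lambda>y. Jhat (H (qof y)) (\<Gamma> (qof y))) (\<lambda>y. Sigmahat (D (qof y))) F rho z
      = (\<Sum>a\<in>UNIV. partial (Phi a) a z)"
    by (simp add: fokker_planck_rhs_def Phi_def Inn_def)
  have h1: "partial (Phi (Inl i)) (Inl i) z + partial (Phi (Inr (Inl i))) (Inr (Inl i)) z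
      = - \<beta> * r * (\<Sum>k\<in>UNIV. Sp i z * H q $ i $ k * x $ k)" for i
  proof -
    have "(\<Sum>k\<in>UNIV. Sp i z * H q $ i $ k * x $ k) = Sp i z * (\<Sum>k\<in>UNIV. H q $ i $ k * x $ k)"
      by (simp add: sum_distrib_left mult_ac)
    then show ?thesis unfolding O_q O_p r_def q_def x_def by (simp add: algebra_simps)
  qed
  have am: "(\<Sum>l\<in>UNIV. Am q k l * x $ l) = -(1/\<beta>) * ((\<Sum>l\<in>UNIV. \<Gamma> q $ k $ l * x $ l) + (\<Sum>l\<in>UNIV. \<Gamma> q $ l $ k * x $ l))" for k
    unfolding Am_def sum.distrib[symmetric] sum_distrib_left by (rule sum.cong) (simp_all add: algebra_simps)
  have h2: "partial (Phi (Inr (Inr k))) (Inr (Inr k)) z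
     = \<beta> * r * (\<Sum>i\<in>UNIV. x $ k * H q $ i $ k * Sp i z)
       + \<beta>/2 * r * (\<Sum>l\<in>UNIV. x $ k * \<Gamma> q $ k $ l * x $ l)
       - \<beta>/2 * r * (\<Sum>l\<in>UNIV. x $ k * \<Gamma> q $ l $ k * x $ l)" for k
  proof -
    have s1: "(\<Sum>i\<in>UNIV. x $ k * H q $ i $ k * Sp i z) = x $ k * (\<Sum>i\<in>UNIV. H q $ i $ k * Sp i z)"
      by (simp add: sum_distrib_left mult_ac)
    have s2: "(\<Sum>l\<in>UNIV. x $ k * \<Gamma> q $ k $ l * x $ l) = x $ k * (\<Sum>l\<in>UNIV. \<Gamma> q $ k $ l * x $ l)"
      by (simp add: sum_distrib_left mult_ac)
    have s3: "(\<Sum>l\<in>UNIV. x $ k * \<Gamma> q $ l $ k * x $ l) = x $ k * (\<Sum>l\<in>UNIV. \<Gamma> q $ l $ k * x $ l)"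
      by (simp add: sum_distrib_left mult_ac)
    show ?thesis unfolding O_chi r_def[symmetric] q_def[symmetric] x_def[symmetric] am s1 s2 s3
      using b0 by (simp add: Am_def field_simps)
  qed
  have "(\<Sum>a\<in>UNIV. partial (Phi a) a z)
     = (\<Sum>i\<in>UNIV. partial (Phi (Inl i)) (Inl i) z + partial (Phi (Inr (Inl i))) (Inr (Inl i)) z)
       + (\<Sum>k\<in>UNIV. partial (Phi (Inr (Inr k))) (Inr (Inr k)) z)"
    by (simp add: sum_UNIV_sum sum.distrib)
  also have "\<dots> = - \<beta> * r * (\<Sum>i\<in>UNIV. \<Sum>k\<in>UNIV. Sp i z * H q $ i $ k * x $ k)
       + (\<beta> * r * (\<Sum>k\<in>UNIV. \<Sum>i\<in>UNIV. x $ k * H q $ i $ k * Sp i z)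
       + \<beta>/2 * r * (\<Sum>k\<in>UNIV. \<Sum>l\<in>UNIV. x $ k * \<Gamma> q $ k $ l * x $ l)
       - \<beta>/2 * r * (\<Sum>k\<in>UNIV. \<Sum>l\<in>UNIV. x $ k * \<Gamma> q $ l $ k * x $ l))"
    unfolding h1 h2 by (simp add: sum.distrib sum_subtractf sum_distrib_left)
  also have "\<dots> = 0"
  proof -
    have a: "(\<Sum>i\<in>UNIV. \<Sum>k\<in>UNIV. Sp i z * H q $ i $ k * x $ k) = (\<Sum>k\<in>UNIV. \<Sum>i\<in>UNIV. x $ k * H q $ i $ k * Sp i z)"
      by (subst sum.swap) (simp add: mult_ac)
    have b: "(\<Sum>k\<in>UNIV. \<Sum>l\<in>UNIV. x $ k * \<Gamma> q $ l $ k * x $ l) = (\<Sum>k\<in>UNIV. \<Sum>l\<in>UNIV. x $ k * \<Gamma> q $ k $ l * x $ l)"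
      by (subst sum.swap) (simp add: mult_ac)
    show ?thesis unfolding a b by simp
  qed
  finally show ?thesis using fp by simp
qed

end

theorem proposition2:
  fixes \<beta> :: real
    and U :: "real^'m::finite \<Rightarrow> real"
    and M :: "real^'m \<Rightarrow> real^'m^'m"
    and H :: "real^'m \<Rightarrow> real^('m \<times> 'n::finite)^'m"
    and \<Gamma> :: "real^'m \<Rightarrow> real^('m \<times> 'n)^('m \<times> 'n)"
    and D :: "real^'m \<Rightarrow> real^('m \<times> 'n)^('m \<times> 'n)"
  assumes beta_pos: "\<beta> > 0"
    and U_smooth: "smooth_fun U"
    and M_smooth: "\<And>i j. smooth_fun (\<lambda>q. M q $ i $ j)"
    and H_smooth: "\<And>i k. smooth_fun (\<lambda>q. H q $ i $ k)"
    and Gamma_smooth: "\<And>k l. smooth_fun (\<lambda>q. \<Gamma> q $ k $ l)"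
    and D_smooth: "\<And>k l. smooth_fun (\<lambda>q. D q $ k $ l)"
    and M_spd: "\<And>q. sym_pos_def_matrix (M q)"
    and normalizable: "(\<lambda>q. exp (- \<beta> * U q)) integrable_on UNIV"
    and fluct_diss: "\<And>q. D q ** transpose (D q) = - (1/\<beta>) *\<^sub>R (\<Gamma> q + transpose (\<Gamma> q))"
  shows "\<forall>z :: ('m,'n) state.
     fokker_planck_rhs
       (\<lambda>y. Jhat (H (qof y)) (\<Gamma> (qof y)))
       (\<lambda>y. Sigmahat (D (qof y)))
       (Fhat \<beta> U M)
       (\<lambda>y. 1 / ((2 * pi) powr (real CARD('m) / 2) * sqrt (det (M (qof y))))
          * exp (- \<beta> * (U (qof y) + 1/2 * (pof y \<bullet> (matrix_inv (M (qof y)) *v pof y))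
                          + 1/2 * (chiof y \<bullet> chiof y))))
       z = 0"
  proof -
  interpret fpl \<beta> U M H \<Gamma> D
    by unfold_locales (auto simp: beta_pos smooth_diff U_smooth M_smooth M_spd fluct_diss)
  show ?thesis using fp_zero unfolding rho_def by blast
qed

end
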